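(* Let $\hat Q_i:\mathcal X\times\mathcal A\to[0,1]$ ($i\in[m]$) be arbitrary and let $\hat\pi=\prod_i\hat\pi_i$ be a product policy that, for every context $x$, is an exact regularized Nash equilibrium of the empirical game $\{\hat Q_i(x,\cdot)\}_i$ (i.e. for all $i$, $\hat\pi_i(\cdot|x)$ maximizes $\pi_i'\mapsto\mathbb E_{a_i\sim\pi_i',\boldsymbol a_{-i}\sim\hat\pi_{-i}(\cdot|x)}[\hat Q_i(x,\boldsymbol a)]-\eta^{-1}\mathrm{KL}(\pi_i'\|\pi_i^{\mathrm{ref}}(\cdot|x))$ over $\Delta(\mathcal A_i)$). Let $\mathcal Z_i=\hat Q_i-r_i^\star$. Then for every $i\in[m]$ and every $x$, $$V_i^{\dagger,\hat\pi_{-i}}(x)-V_i^{\hat\pi}(x)\le\frac\eta2\max_{a_i\in\mathcal A_i}\mathbb E_{\boldsymbol a_{-i}\sim\hat\pi_{-i}(\cdot|x)}\big[\mathcal Z_i(x,a_i,\boldsymbol a_{-i})^2\big].$$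
   Context: $m$-player game: contexts $x\in\mathcal X$, finite action sets $\mathcal A_i$, $\mathcal A=\prod_i\mathcal A_i$, rewards $r_i^\star:\mathcal X\times\mathcal A\to[0,1]$, reference policies $\pi_i^{\mathrm{ref}}$, $\eta>0$. $V_i^\pi(x)=\mathbb E_{\boldsymbol a\sim\pi(\cdot|x)}[r_i^\star(x,\boldsymbol a)]-\eta^{-1}\mathrm{KL}(\pi_i(\cdot|x)\|\pi_i^{\mathrm{ref}}(\cdot|x))$ and $V_i^{\dagger,\nu_{-i}}(x)=\max_{\pi_i'}V_i^{(\pi_i',\nu_{-i})}(x)$, where $(\pi_i',\nu_{-i})$ is the joint policy $\pi_i'(a_i|x)\nu_{-i}(\boldsymbol a_{-i}|x)$; $\hat\pi_{-i}=\prod_{j\ne i}\hat\pi_j$. *)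

theory Defs
  imports "HOL-Analysis.Analysis"
begin

text \<open>Players are 0,...,m-1; player i has finite action set A i (actions of a common type 'a).
  A joint action is a function nat => 'a, ranging over PiE {..<m} A.
  A policy for player i is pol i :: 'x => 'a => real, a probability vector on A i for each context.\<close>

definition is_dist :: "'a set \<Rightarrow> ('a \<Rightarrow> real) \<Rightarrow> bool" where
  "is_dist S p \<longleftrightarrow> (\<forall>a\<in>S. 0 \<le> p a) \<and> sum p S = 1"

definition KL :: "'a set \<Rightarrow> ('a \<Rightarrow> real) \<Rightarrow> ('a \<Rightarrow> real) \<Rightarrow> ereal" where
  "KL S p q = (if (\<exists>a\<in>S. 0 < p a \<and> q a = 0) then \<infinity>
     else ereal (\<Sum>a\<in>S. if p a = 0 then 0 else p a * ln (p a / q a)))"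

definition joint_prob :: "nat \<Rightarrow> (nat \<Rightarrow> 'x \<Rightarrow> 'a \<Rightarrow> real) \<Rightarrow> 'x \<Rightarrow> (nat \<Rightarrow> 'a) \<Rightarrow> real" where
  "joint_prob m pol x a = (\<Prod>j<m. pol j x (a j))"

definition Vval :: "nat \<Rightarrow> (nat \<Rightarrow> 'a set) \<Rightarrow> (nat \<Rightarrow> 'x \<Rightarrow> (nat \<Rightarrow> 'a) \<Rightarrow> real)
    \<Rightarrow> (nat \<Rightarrow> 'x \<Rightarrow> 'a \<Rightarrow> real) \<Rightarrow> real \<Rightarrow> (nat \<Rightarrow> 'x \<Rightarrow> 'a \<Rightarrow> real) \<Rightarrow> nat \<Rightarrow> 'x \<Rightarrow> ereal" where
  "Vval m A rw ref \<eta> pol i x =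
     ereal (\<Sum>a\<in>PiE {..<m} A. joint_prob m pol x a * rw i x a)
     - ereal (1 / \<eta>) * KL (A i) (pol i x) (ref i x)"

definition Vdagger :: "nat \<Rightarrow> (nat \<Rightarrow> 'a set) \<Rightarrow> (nat \<Rightarrow> 'x \<Rightarrow> (nat \<Rightarrow> 'a) \<Rightarrow> real)
    \<Rightarrow> (nat \<Rightarrow> 'x \<Rightarrow> 'a \<Rightarrow> real) \<Rightarrow> real \<Rightarrow> (nat \<Rightarrow> 'x \<Rightarrow> 'a \<Rightarrow> real) \<Rightarrow> nat \<Rightarrow> 'x \<Rightarrow> ereal" where
  "Vdagger m A rw ref \<eta> pol i x =
     (SUP p\<in>{p. is_dist (A i) p}. Vval m A rw ref \<eta> (pol(i := (\<lambda>y. p))) i x)"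

text \<open>Expectation over a_{-i} ~ pol_{-i}(.|x) of g(a_i, a_{-i}); the joint action is b(i := ai).\<close>
definition E_minus :: "nat \<Rightarrow> (nat \<Rightarrow> 'a set) \<Rightarrow> (nat \<Rightarrow> 'x \<Rightarrow> 'a \<Rightarrow> real) \<Rightarrow> nat \<Rightarrow> 'x
    \<Rightarrow> ((nat \<Rightarrow> 'a) \<Rightarrow> real) \<Rightarrow> real" where
  "E_minus m A pol i x g =
     (\<Sum>b\<in>PiE ({..<m} - {i}) A. (\<Prod>j\<in>{..<m} - {i}. pol j x (b j)) * g b)"

end

theory Submission
  imports Defs
begin

lemma hoeff_fin:
  fixes S :: "'a set" and g y :: "'a \<Rightarrow> real" and C :: real
  assumes fS: "finite S" and g0: "\<forall>a\<in>S. g a \<ge> 0" and g1: "sum g S = 1"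
    and yC: "\<forall>a\<in>S. (y a)\<^sup>2 \<le> C"
  shows "ln (\<Sum>a\<in>S. g a * exp (y a)) \<le> (\<Sum>a\<in>S. g a * y a) + C / 2"
proof -
  define S0 where "S0 = (\<lambda>t. \<Sum>a\<in>S. g a * exp (t * y a))"
  define S1 where "S1 = (\<lambda>t. \<Sum>a\<in>S. g a * y a * exp (t * y a))"
  define S2 where "S2 = (\<lambda>t. \<Sum>a\<in>S. g a * (y a)\<^sup>2 * exp (t * y a))"
  have "\<exists>a\<in>S. g a > 0"
  proof (rule ccontr)
    assume "\<not> ?thesis"
    then have "\<forall>a\<in>S. g a \<le> 0" by auto
    then have "sum g S \<le> 0" by (intro sum_nonpos) auto
    with g1 show False by simp
  qed
  then obtain a0 where a0: "a0 \<in> S" "g a0 > 0" by blast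
  have S0pos: "S0 t > 0" for t
    unfolding S0_def using a0 g0 by (intro sum_pos2[OF fS a0(1)]) auto
  have dS0: "(S0 has_real_derivative S1 t) (at t)" for t
    unfolding S0_def S1_def
    by (auto intro!: derivative_eq_intros sum.cong simp: algebra_simps)
  have dS1: "(S1 has_real_derivative S2 t) (at t)" for t
    unfolding S2_def S1_def
    by (auto intro!: derivative_eq_intros sum.cong simp: algebra_simps power2_eq_square)
  define h2 where "h2 = (\<lambda>t. S2 t / S0 t - (S1 t / S0 t)\<^sup>2)"
  define Ls where "Ls = (\<lambda>n. [(\<lambda>t. ln (S0 t)), (\<lambda>t. S1 t / S0 t), h2] ! n)"
  have d1: "((\<lambda>t. ln (S0 t)) has_real_derivative S1 t / S0 t) (at t)" for t
    using S0pos[of t] by (auto intro!: derivative_eq_intros dS0 simp: field_simps)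
  have d2: "((\<lambda>t. S1 t / S0 t) has_real_derivative h2 t) (at t)" for t
    using S0pos[of t] unfolding h2_def
    by (auto intro!: derivative_eq_intros dS0 dS1 simp: field_simps power2_eq_square)
  have diff: "\<forall>m t. m < 2 \<and> 0 \<le> t \<and> t \<le> 1 \<longrightarrow> (Ls m has_real_derivative Ls (Suc m) t) (at t)"
    using d1 d2 by (auto simp: Ls_def nth_Cons split: nat.splits)
  from Taylor[of 2 Ls "\<lambda>t. ln (S0 t)" 0 1 0 1, OF _ _ diff]
  obtain t where t: "ln (S0 1) = ln (S0 0) + S1 0 / S0 0 + h2 t / 2"
    by (auto simp: Ls_def lessThan_nat_numeral)
  have "S0 0 = 1" using g1 by (simp add: S0_def)
  have "S1 0 = (\<Sum>a\<in>S. g a * y a)" by (simp add: S1_def)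
  have "S2 t \<le> C * S0 t"
    unfolding S2_def S0_def sum_distrib_left
  proof (rule sum_mono)
    fix a assume a: "a \<in> S"
    have "0 \<le> g a * exp (t * y a)" using g0 a by simp
    then have "(y a)\<^sup>2 * (g a * exp (t * y a)) \<le> C * (g a * exp (t * y a))"
      using yC a by (intro mult_right_mono) auto
    then show "g a * (y a)\<^sup>2 * exp (t * y a) \<le> C * (g a * exp (t * y a))"
      by (simp add: ac_simps)
  qed
  then have "S2 t / S0 t \<le> C" using S0pos[of t] by (simp add: divide_le_eq mult.commute)
  then have "h2 t \<le> C"
    unfolding h2_def using zero_le_power2[of "S1 t / S0 t"] by linarith
  show ?thesis using t \<open>S0 0 = 1\<close> \<open>S1 0 = _\<close> \<open>h2 t \<le> C\<close>
    by (simp add: S0_def)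
qed


definition KLs :: "'a set \<Rightarrow> ('a \<Rightarrow> real) \<Rightarrow> ('a \<Rightarrow> real) \<Rightarrow> real" where
  "KLs S p q = (\<Sum>a\<in>S. if p a = 0 then 0 else p a * ln (p a / q a))"

lemma gibbs:
  assumes fS: "finite S" and p: "is_dist S p" and g: "is_dist S g"
    and pg: "\<forall>a\<in>S. p a > 0 \<longrightarrow> g a > 0"
  shows "KLs S p g \<ge> 0" and "KLs S p g \<le> 0 \<Longrightarrow> \<forall>a\<in>S. p a = g a"
proof -
  define D where "D = (\<lambda>a. if p a = 0 then g a else (g a - p a) - p a * ln (g a / p a))"
  have Dnn: "D a \<ge> 0" if "a \<in> S" for a
  proof (cases "p a = 0")
    case True then show ?thesis using g that by (simp add: D_def is_dist_def)
  next
    case False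
    then have pa: "p a > 0" using p that by (simp add: is_dist_def less_le)
    then have ga: "g a > 0" using pg that by auto
    have "ln (g a / p a) \<le> g a / p a - 1" using pa ga by (intro ln_le_minus_one) simp
    then have "p a * ln (g a / p a) \<le> p a * (g a / p a - 1)" using pa by (intro mult_left_mono) auto
    moreover have "p a * (g a / p a - 1) = g a - p a" using pa by (simp add: field_simps)
    ultimately show ?thesis using False by (simp add: D_def)
  qed
  have tm: "D a = (g a - p a) + (if p a = 0 then 0 else p a * ln (p a / g a))" if "a \<in> S" for a
  proof (cases "p a = 0")
    case False
    then have pa: "p a > 0" using p that by (simp add: is_dist_def less_le)
    then have ga: "g a > 0" using pg that by auto
    show ?thesis using pa ga False by (simp add: D_def ln_div algebra_simps)
  qed (simp add: D_def)
  have sumD: "sum D S = KLs S p g"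
    using p g by (simp add: sum.cong[OF refl tm] sum.distrib sum_subtractf KLs_def is_dist_def)
  show "KLs S p g \<ge> 0" using sumD Dnn by (metis sum_nonneg)
  assume "KLs S p g \<le> 0"
  then have "sum D S = 0" using sumD Dnn \<open>KLs S p g \<ge> 0\<close> by (metis sum_nonneg order.antisym)
  then have D0: "\<forall>a\<in>S. D a = 0" using sum_nonneg_eq_0_iff[OF fS] Dnn by blast
  show "\<forall>a\<in>S. p a = g a"
  proof
    fix a assume a: "a \<in> S"
    show "p a = g a"
    proof (cases "p a = 0")
      case True
      have "D a = 0" using D0 a by blast
      then show ?thesis using True by (simp add: D_def)
    next
      case False
      then have pa: "p a > 0" using p a by (simp add: is_dist_def less_le)
      then have ga: "g a > 0" using pg a by auto
      have "D a = 0" using D0 a by blast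
      then have "p a * ln (g a / p a) = g a - p a" using False by (simp add: D_def)
      moreover have "p a * (g a / p a - 1) = g a - p a" using pa by (simp add: field_simps)
      ultimately have "p a * ln (g a / p a) = p a * (g a / p a - 1)" by simp
      then have "ln (g a / p a) = g a / p a - 1" using pa by simp
      then have "g a / p a = 1" using ln_eq_minus_one[of "g a / p a"] pa ga by simp
      then show ?thesis using pa by simp
    qed
  qed
qed

lemma gibbs_identity:
  assumes fS: "finite S" and w: "is_dist S w" and p: "is_dist S p"
    and pw: "\<forall>a\<in>S. p a > 0 \<longrightarrow> w a > 0" and eta: "\<eta> > 0"
    and Z: "Z = (\<Sum>a\<in>S. w a * exp (\<eta> * q a))" and Zpos: "Z > 0"
  shows "(\<Sum>a\<in>S. p a * q a) - KLs S p w / \<eta>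
       = (ln Z - KLs S p (\<lambda>a. w a * exp (\<eta> * q a) / Z)) / \<eta>"
proof -
  have tm: "(if p a = 0 then 0 else p a * ln (p a / (w a * exp (\<eta> * q a) / Z)))
     = (if p a = 0 then 0 else p a * ln (p a / w a)) - \<eta> * (p a * q a) + p a * ln Z" if "a \<in> S" for a
  proof (cases "p a = 0")
    case False
    then have pa: "p a > 0" using p that by (simp add: is_dist_def less_le)
    then have wa: "w a > 0" using pw that by auto
    have e: "ln (p a / (w a * exp (\<eta> * q a) / Z)) = ln (p a / w a) - \<eta> * q a + ln Z"
      using pa wa Zpos by (simp add: ln_div ln_mult)
    have "p a * ln (p a / (w a * exp (\<eta> * q a) / Z)) = p a * (ln (p a / w a) - \<eta> * q a + ln Z)"
      by (simp only: e)
    also have "\<dots> = p a * ln (p a / w a) - \<eta> * (p a * q a) + p a * ln Z"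
      by (simp add: algebra_simps)
    finally show ?thesis using False by simp
  qed simp
  have "KLs S p (\<lambda>a. w a * exp (\<eta> * q a) / Z) = KLs S p w - \<eta> * (\<Sum>a\<in>S. p a * q a) + ln Z"
    using p unfolding KLs_def
    by (simp add: sum.cong[OF refl tm] sum.distrib sum_subtractf sum_distrib_left[symmetric]
         sum_distrib_right[symmetric] is_dist_def)
  then show ?thesis using eta by (simp add: field_simps)
qed

lemma jensen_sq:
  fixes W f :: "'b \<Rightarrow> real"
  assumes "finite T" "\<forall>b\<in>T. W b \<ge> 0" "sum W T = 1"
  shows "(\<Sum>b\<in>T. W b * f b)\<^sup>2 \<le> (\<Sum>b\<in>T. W b * (f b)\<^sup>2)"
proof -
  define \<mu> where "\<mu> = (\<Sum>b\<in>T. W b * f b)"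
  have "0 \<le> (\<Sum>b\<in>T. W b * (f b - \<mu>)\<^sup>2)" using assms by (intro sum_nonneg) auto
  also have "\<dots> = (\<Sum>b\<in>T. W b * (f b)\<^sup>2) - 2 * \<mu> * (\<Sum>b\<in>T. W b * f b) + \<mu>\<^sup>2 * sum W T"
    by (simp add: power2_eq_square algebra_simps sum.distrib sum_subtractf sum_distrib_left sum_distrib_right)
  finally show ?thesis using assms(3) by (simp add: \<mu>_def power2_eq_square)
qed

lemma decomp:
  assumes i: "i < m" and fin: "\<And>j. j < m \<Longrightarrow> finite (A j)"
  shows "(\<Sum>a\<in>PiE {..<m} A. joint_prob m pol x a * f a)
       = (\<Sum>ai\<in>A i. pol i x ai * E_minus m A pol i x (\<lambda>b. f (b(i := ai))))"
proof -
  define J where "J = {..<m} - {i}"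
  have I: "{..<m} = insert i J" using i by (auto simp: J_def)
  have iJ: "i \<notin> J" by (simp add: J_def)
  have fJ: "finite J" by (simp add: J_def)
  have fPi: "finite (PiE J A)" using fin by (intro finite_PiE fJ) (auto simp: J_def)
  have jp: "joint_prob m pol x (b(i := ai)) = pol i x ai * (\<Prod>j\<in>J. pol j x (b j))" for b ai
  proof -
    have "joint_prob m pol x (b(i := ai)) = (\<Prod>j\<in>insert i J. pol j x ((b(i := ai)) j))"
      unfolding joint_prob_def I ..
    also have "\<dots> = pol i x ai * (\<Prod>j\<in>J. pol j x ((b(i := ai)) j))"
      using fJ iJ by simp
    also have "(\<Prod>j\<in>J. pol j x ((b(i := ai)) j)) = (\<Prod>j\<in>J. pol j x (b j))"
      using iJ by (intro prod.cong) auto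
    finally show ?thesis .
  qed
  have "(\<Sum>a\<in>PiE {..<m} A. joint_prob m pol x a * f a)
      = (\<Sum>a\<in>(\<lambda>(y, g). g(i := y)) ` (A i \<times> PiE J A). joint_prob m pol x a * f a)"
    unfolding I PiE_insert_eq ..
  also have "\<dots> = (\<Sum>(ai, b)\<in>A i \<times> PiE J A. joint_prob m pol x (b(i := ai)) * f (b(i := ai)))"
    by (subst sum.reindex[OF inj_combinator[OF iJ]]) (simp add: case_prod_unfold)
  also have "\<dots> = (\<Sum>ai\<in>A i. \<Sum>b\<in>PiE J A. joint_prob m pol x (b(i := ai)) * f (b(i := ai)))"
    by (rule sum.cartesian_product[symmetric])
  also have "\<dots> = (\<Sum>ai\<in>A i. pol i x ai * E_minus m A pol i x (\<lambda>b. f (b(i := ai))))"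
    unfolding E_minus_def J_def[symmetric] jp
    by (simp add: sum_distrib_left mult.assoc)
  finally show ?thesis .
qed

lemma weights_sum:
  fixes m :: nat
  assumes i: "i < m" and fin: "\<And>j. j < m \<Longrightarrow> finite (A j)"
    and d: "\<And>j. j < m \<Longrightarrow> is_dist (A j) (pol j x)"
  shows "(\<Sum>b\<in>PiE ({..<m} - {i}) A. \<Prod>j\<in>{..<m} - {i}. pol j x (b j)) = 1"
proof -
  have "(\<Sum>b\<in>PiE ({..<m} - {i}) A. \<Prod>j\<in>{..<m} - {i}. pol j x (b j))
     = (\<Prod>j\<in>{..<m} - {i}. \<Sum>a\<in>A j. pol j x a)"
    by (rule prod_sum_PiE[symmetric]) (auto intro: fin simp del: Diff_iff)
  also have "\<dots> = 1" using d by (intro prod.neutral) (auto simp: is_dist_def)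
  finally show ?thesis .
qed

lemma weights_nonneg:
  assumes d: "\<And>j. j < m \<Longrightarrow> is_dist (A j) (pol j x)" and b: "b \<in> PiE ({..<m} - {i}) A"
  shows "(\<Prod>j\<in>{..<m} - {i}. pol j x (b j)) \<ge> 0"
  using d b by (intro prod_nonneg) (auto simp: is_dist_def PiE_def Pi_def)


lemma Vform:
  fixes m :: nat
  assumes i: "i < m" and fin: "\<And>j. j < m \<Longrightarrow> finite (A j)"
    and same: "\<And>j. j \<noteq> i \<Longrightarrow> pol j x = pihat j x"
  shows "Vval m A rw ref \<eta> pol i x
    = ereal (\<Sum>ai\<in>A i. pol i x ai * E_minus m A pihat i x (\<lambda>b. rw i x (b(i := ai))))
      - ereal (1 / \<eta>) * KL (A i) (pol i x) (ref i x)"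
proof -
  have E: "E_minus m A pol i x = E_minus m A pihat i x"
    unfolding E_minus_def using same by (intro ext sum.cong refl arg_cong2[where f="(*)"] prod.cong) auto
  have D: "(\<Sum>a\<in>PiE {..<m} A. joint_prob m pol x a * rw i x a)
     = (\<Sum>ai\<in>A i. pol i x ai * E_minus m A pol i x (\<lambda>b. rw i x (b(i := ai))))"
    by (rule decomp[OF i fin])
  show ?thesis unfolding Vval_def D E ..
qed

lemma V_bad:
  assumes "\<eta> > 0" "\<exists>a\<in>S. 0 < p a \<and> w a = 0"
  shows "ereal L - ereal (1 / \<eta>) * KL S p w = - \<infinity>"
  using assms by (simp add: KL_def)

lemma V_good:
  assumes "\<eta> > 0" "\<not> (\<exists>a\<in>S. 0 < p a \<and> w a = 0)"
  shows "ereal L - ereal (1 / \<eta>) * KL S p w = ereal (L - KLs S p w / \<eta>)"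
  using assms by (simp add: KL_def KLs_def)

theorem mainTheorem6:
  fixes m :: nat and A :: "nat \<Rightarrow> 'a set"
    and rstar Qhat :: "nat \<Rightarrow> 'x \<Rightarrow> (nat \<Rightarrow> 'a) \<Rightarrow> real"
    and ref pihat :: "nat \<Rightarrow> 'x \<Rightarrow> 'a \<Rightarrow> real" and \<eta> :: real
  assumes fin: "\<And>j. j < m \<Longrightarrow> finite (A j) \<and> A j \<noteq> {}"
    and eta: "\<eta> > 0"
    and r_range: "\<And>j x a. j < m \<Longrightarrow> a \<in> PiE {..<m} A \<Longrightarrow> 0 \<le> rstar j x a \<and> rstar j x a \<le> 1"
    and Q_range: "\<And>j x a. j < m \<Longrightarrow> a \<in> PiE {..<m} A \<Longrightarrow> 0 \<le> Qhat j x a \<and> Qhat j x a \<le> 1"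
    and ref_dist: "\<And>j x. j < m \<Longrightarrow> is_dist (A j) (ref j x)"
    and pihat_dist: "\<And>j x. j < m \<Longrightarrow> is_dist (A j) (pihat j x)"
    and nash: "\<And>j x p. j < m \<Longrightarrow> is_dist (A j) p \<Longrightarrow>
        Vval m A Qhat ref \<eta> (pihat(j := (\<lambda>y. p))) j x \<le> Vval m A Qhat ref \<eta> pihat j x"
    and i: "i < m"
  shows "Vdagger m A rstar ref \<eta> pihat i x - Vval m A rstar ref \<eta> pihat i x
     \<le> ereal (\<eta> / 2 * Max ((\<lambda>ai. E_minus m A pihat i x
            (\<lambda>b. (Qhat i x (b(i := ai)) - rstar i x (b(i := ai)))\<^sup>2)) ` A i))"
proof -
  define S where "S = A i"
  define w where "w = ref i x"
  define \<pi> where "\<pi> = pihat i x"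
  define uq where "uq = (\<lambda>ai. E_minus m A pihat i x (\<lambda>b. Qhat i x (b(i := ai))))"
  define ur where "ur = (\<lambda>ai. E_minus m A pihat i x (\<lambda>b. rstar i x (b(i := ai))))"
  define M where "M = Max ((\<lambda>ai. E_minus m A pihat i x
            (\<lambda>b. (Qhat i x (b(i := ai)) - rstar i x (b(i := ai)))\<^sup>2)) ` A i)"
  have finA: "\<And>j. j < m \<Longrightarrow> finite (A j)" using fin by blast
  have fS: "finite S" and neS: "S \<noteq> {}" using fin i by (auto simp: S_def)
  have wd: "is_dist S w" using ref_dist i by (simp add: S_def w_def)
  have pid: "is_dist S \<pi>" using pihat_dist i by (simp add: S_def \<pi>_def)
  have VQ: "Vval m A Qhat ref \<eta> (pihat(i := (\<lambda>y. p))) i x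
      = ereal (\<Sum>a\<in>S. p a * uq a) - ereal (1 / \<eta>) * KL S p w" for p
    unfolding S_def w_def uq_def by (subst Vform[OF i finA]) auto
  have VQpi: "Vval m A Qhat ref \<eta> pihat i x
      = ereal (\<Sum>a\<in>S. \<pi> a * uq a) - ereal (1 / \<eta>) * KL S \<pi> w"
    unfolding S_def w_def uq_def \<pi>_def by (subst Vform[OF i finA]) auto
  have VR: "Vval m A rstar ref \<eta> (pihat(i := (\<lambda>y. p))) i x
      = ereal (\<Sum>a\<in>S. p a * ur a) - ereal (1 / \<eta>) * KL S p w" for p
    unfolding S_def w_def ur_def by (subst Vform[OF i finA]) auto
  have VRpi: "Vval m A rstar ref \<eta> pihat i x
      = ereal (\<Sum>a\<in>S. \<pi> a * ur a) - ereal (1 / \<eta>) * KL S \<pi> w"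
    unfolding S_def w_def ur_def \<pi>_def by (subst Vform[OF i finA]) auto
  have nashS: "is_dist S p \<Longrightarrow> ereal (\<Sum>a\<in>S. p a * uq a) - ereal (1 / \<eta>) * KL S p w
      \<le> ereal (\<Sum>a\<in>S. \<pi> a * uq a) - ereal (1 / \<eta>) * KL S \<pi> w" for p
    using nash[OF i, of p x] unfolding VQ VQpi S_def by simp
  have pigood: "\<not> (\<exists>a\<in>S. 0 < \<pi> a \<and> w a = 0)"
  proof
    assume bad: "\<exists>a\<in>S. 0 < \<pi> a \<and> w a = 0"
    have "ereal (\<Sum>a\<in>S. w a * uq a) - ereal (1 / \<eta>) * KL S w w \<le> - \<infinity>"
      using nashS[OF wd] V_bad[OF eta bad] by simp
    moreover have "ereal (\<Sum>a\<in>S. w a * uq a) - ereal (1 / \<eta>) * KL S w w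
       = ereal ((\<Sum>a\<in>S. w a * uq a) - KLs S w w / \<eta>)"
      by (rule V_good[OF eta]) auto
    ultimately show False by simp
  qed
  have pi_w: "\<forall>a\<in>S. \<pi> a > 0 \<longrightarrow> w a > 0"
    using pigood wd by (auto simp: is_dist_def less_le)
  have wpos: "\<exists>a\<in>S. w a > 0"
  proof (rule ccontr)
    assume "\<not> ?thesis"
    then have "\<forall>a\<in>S. w a \<le> 0" by auto
    then have "sum w S \<le> 0" by (intro sum_nonpos) auto
    with wd show False by (simp add: is_dist_def)
  qed
  define Zq where "Zq = (\<Sum>a\<in>S. w a * exp (\<eta> * uq a))"
  define Zr where "Zr = (\<Sum>a\<in>S. w a * exp (\<eta> * ur a))"
  define g where "g = (\<lambda>a. w a * exp (\<eta> * uq a) / Zq)"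
  define gr where "gr = (\<lambda>a. w a * exp (\<eta> * ur a) / Zr)"
  have Zqpos: "Zq > 0"
  proof -
    obtain a where a: "a \<in> S" "w a > 0" using wpos by blast
    show ?thesis unfolding Zq_def
      by (rule sum_pos2[OF fS a(1)]) (use a wd in \<open>auto simp: is_dist_def\<close>)
  qed
  have Zrpos: "Zr > 0"
  proof -
    obtain a where a: "a \<in> S" "w a > 0" using wpos by blast
    show ?thesis unfolding Zr_def
      by (rule sum_pos2[OF fS a(1)]) (use a wd in \<open>auto simp: is_dist_def\<close>)
  qed
  have gd: "is_dist S g" using wd Zqpos
    by (auto simp: is_dist_def g_def sum_divide_distrib[symmetric] Zq_def[symmetric])
  have grd: "is_dist S gr" using wd Zrpos
    by (auto simp: is_dist_def gr_def sum_divide_distrib[symmetric] Zr_def[symmetric])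
  have g_pos: "\<forall>a\<in>S. w a > 0 \<longrightarrow> g a > 0" using Zqpos by (auto simp: g_def)
  have gr_pos: "\<forall>a\<in>S. w a > 0 \<longrightarrow> gr a > 0" using Zrpos by (auto simp: gr_def)
  have g_w: "\<forall>a\<in>S. g a > 0 \<longrightarrow> w a > 0" using Zqpos wd
    by (auto simp: g_def is_dist_def less_le)
  have ggood: "\<not> (\<exists>a\<in>S. 0 < g a \<and> w a = 0)" using g_w by auto
  have KLgg: "KLs S g g = 0" unfolding KLs_def by (intro sum.neutral) auto
  have "ereal ((\<Sum>a\<in>S. g a * uq a) - KLs S g w / \<eta>) \<le> ereal ((\<Sum>a\<in>S. \<pi> a * uq a) - KLs S \<pi> w / \<eta>)"
    using nashS[OF gd] V_good[OF eta ggood] V_good[OF eta pigood] by simp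
  then have "(ln Zq - KLs S g g) / \<eta> \<le> (ln Zq - KLs S \<pi> g) / \<eta>"
    using gibbs_identity[OF fS wd gd g_w eta Zq_def Zqpos] gibbs_identity[OF fS wd pid pi_w eta Zq_def Zqpos]
    by (simp add: g_def)
  then have "KLs S \<pi> g \<le> 0" using eta KLgg by (simp add: divide_right_mono_neg field_simps)
  then have pi_g: "\<forall>a\<in>S. \<pi> a = g a"
    using gibbs(2)[OF fS pid gd] pi_w g_pos by blast
  have Vsup: "Vdagger m A rstar ref \<eta> pihat i x \<le> ereal (ln Zr / \<eta>)"
    unfolding Vdagger_def
  proof (rule SUP_least)
    fix p assume "p \<in> {p. is_dist (A i) p}"
    then have pd: "is_dist S p" by (simp add: S_def)
    show "Vval m A rstar ref \<eta> (pihat(i := (\<lambda>y. p))) i x \<le> ereal (ln Zr / \<eta>)"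
    proof (cases "\<exists>a\<in>S. 0 < p a \<and> w a = 0")
      case True then show ?thesis unfolding VR using V_bad[OF eta True] by simp
    next
      case False
      have pw: "\<forall>a\<in>S. p a > 0 \<longrightarrow> w a > 0" using False wd by (auto simp: is_dist_def less_le)
      have "KLs S p gr \<ge> 0" using gibbs(1)[OF fS pd grd] pw gr_pos by blast
      then show ?thesis unfolding VR V_good[OF eta False]
        gibbs_identity[OF fS wd pd pw eta Zr_def Zrpos]
        using eta by (simp add: gr_def divide_right_mono)
    qed
  qed
  have Vpi: "Vval m A rstar ref \<eta> pihat i x = ereal ((ln Zr - KLs S \<pi> gr) / \<eta>)"
    unfolding VRpi V_good[OF eta pigood] gibbs_identity[OF fS wd pid pi_w eta Zr_def Zrpos]
    by (simp add: gr_def)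
  define z where "z = (\<lambda>a. uq a - ur a)"
  have zM: "(z a)\<^sup>2 \<le> M" if a: "a \<in> S" for a
  proof -
    define W where "W = (\<lambda>b. \<Prod>j\<in>{..<m} - {i}. pihat j x (b j))"
    define T where "T = PiE ({..<m} - {i}) A"
    have fT: "finite T" unfolding T_def using finA by (intro finite_PiE) auto
    have Wn: "\<forall>b\<in>T. W b \<ge> 0" unfolding W_def T_def by (intro ballI weights_nonneg[where pol=pihat]) (auto intro: pihat_dist)
    have W1: "sum W T = 1" unfolding W_def T_def by (rule weights_sum[OF i finA]) (auto intro: pihat_dist)
    have "z a = (\<Sum>b\<in>T. W b * (Qhat i x (b(i := a)) - rstar i x (b(i := a))))"
      unfolding z_def uq_def ur_def E_minus_def W_def T_def
      by (simp add: sum_subtractf right_diff_distrib)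
    then have "(z a)\<^sup>2 \<le> (\<Sum>b\<in>T. W b * (Qhat i x (b(i := a)) - rstar i x (b(i := a)))\<^sup>2)"
      using jensen_sq[OF fT Wn W1] by simp
    also have "\<dots> = E_minus m A pihat i x (\<lambda>b. (Qhat i x (b(i := a)) - rstar i x (b(i := a)))\<^sup>2)"
      unfolding E_minus_def W_def T_def ..
    also have "\<dots> \<le> M" unfolding M_def using a fS by (intro Max_ge) (auto simp: S_def)
    finally show ?thesis .
  qed
  have tm: "(if g a = 0 then 0 else g a * ln (g a / gr a)) = g a * (\<eta> * z a) + g a * (ln Zr - ln Zq)"
    if a: "a \<in> S" for a
  proof (cases "g a = 0")
    case False
    then have "w a > 0" using g_w gd a by (auto simp: is_dist_def less_le)
    then have "g a / gr a = exp (\<eta> * z a) * (Zr / Zq)"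
      using Zqpos Zrpos by (simp add: g_def gr_def z_def field_simps exp_diff right_diff_distrib)
    then have e: "ln (g a / gr a) = \<eta> * z a + (ln Zr - ln Zq)"
      using Zqpos Zrpos by (simp add: ln_mult ln_div)
    have "g a * ln (g a / gr a) = g a * (\<eta> * z a + (ln Zr - ln Zq))" by (simp only: e)
    then show ?thesis using False by (simp only: if_False distrib_left)
  qed simp
  have KLsum: "KLs S \<pi> gr = \<eta> * (\<Sum>a\<in>S. g a * z a) + (ln Zr - ln Zq)"
  proof -
    have "KLs S \<pi> gr = KLs S g gr" unfolding KLs_def using pi_g by (intro sum.cong) auto
    also have "\<dots> = (\<Sum>a\<in>S. g a * (\<eta> * z a)) + (\<Sum>a\<in>S. g a) * (ln Zr - ln Zq)"
      unfolding KLs_def by (simp add: sum.cong[OF refl tm] sum.distrib sum_distrib_right)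
    also have "\<dots> = \<eta> * (\<Sum>a\<in>S. g a * z a) + (ln Zr - ln Zq)"
      using gd by (simp add: is_dist_def sum_distrib_left algebra_simps)
    finally show ?thesis .
  qed
  have ZrZq: "Zr / Zq = (\<Sum>a\<in>S. g a * exp (- \<eta> * z a))"
  proof -
    have "Zr / Zq = (\<Sum>a\<in>S. w a * exp (\<eta> * ur a) / Zq)"
      unfolding Zr_def by (simp add: sum_divide_distrib)
    also have "\<dots> = (\<Sum>a\<in>S. g a * exp (- \<eta> * z a))"
    proof (intro sum.cong refl)
      fix a
      have "exp (\<eta> * ur a) = exp (\<eta> * uq a) * exp (- \<eta> * z a)"
        by (simp add: z_def exp_add[symmetric] algebra_simps)
      then show "w a * exp (\<eta> * ur a) / Zq = g a * exp (- \<eta> * z a)"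
        by (simp add: g_def)
    qed
    finally show ?thesis .
  qed
  have "ln Zr - ln Zq = ln (\<Sum>a\<in>S. g a * exp (- \<eta> * z a))"
    using Zqpos Zrpos ZrZq[symmetric] by (simp only: ln_div) simp
  also have "\<dots> \<le> (\<Sum>a\<in>S. g a * (- \<eta> * z a)) + \<eta>\<^sup>2 * M / 2"
  proof -
    have yC: "\<forall>a\<in>S. (- \<eta> * z a)\<^sup>2 \<le> \<eta>\<^sup>2 * M"
    proof
      fix a assume "a \<in> S"
      then have "(z a)\<^sup>2 \<le> M" by (rule zM)
      then have "\<eta>\<^sup>2 * (z a)\<^sup>2 \<le> \<eta>\<^sup>2 * M" by (intro mult_left_mono) auto
      then show "(- \<eta> * z a)\<^sup>2 \<le> \<eta>\<^sup>2 * M" by (simp only: power_mult_distrib power2_minus)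
    qed
    show ?thesis
      by (rule hoeff_fin[OF fS _ _ yC]) (use gd in \<open>auto simp: is_dist_def\<close>)
  qed
  finally have lnb: "ln Zr - ln Zq \<le> (\<Sum>a\<in>S. g a * (- \<eta> * z a)) + \<eta>\<^sup>2 * M / 2" .
  have sneg: "(\<Sum>a\<in>S. g a * (- \<eta> * z a)) = - (\<eta> * (\<Sum>a\<in>S. g a * z a))"
    unfolding sum_distrib_left sum_negf[symmetric] by (rule sum.cong) auto
  have KLb: "KLs S \<pi> gr \<le> \<eta>\<^sup>2 * M / 2"
    using lnb sneg KLsum by linarith
  have "Vdagger m A rstar ref \<eta> pihat i x - Vval m A rstar ref \<eta> pihat i x
      \<le> ereal (ln Zr / \<eta>) - ereal ((ln Zr - KLs S \<pi> gr) / \<eta>)"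
    unfolding Vpi by (rule ereal_minus_mono[OF Vsup order.refl])
  also have "\<dots> = ereal (KLs S \<pi> gr / \<eta>)"
  proof -
    have "ln Zr / \<eta> - (ln Zr - KLs S \<pi> gr) / \<eta> = KLs S \<pi> gr / \<eta>"
      by (simp add: diff_divide_distrib)
    then show ?thesis by simp
  qed
  also have "\<dots> \<le> ereal (\<eta> / 2 * M)"
  proof -
    have "KLs S \<pi> gr / \<eta> \<le> (\<eta>\<^sup>2 * M / 2) / \<eta>" using KLb eta by (intro divide_right_mono) auto
    also have "\<dots> = \<eta> / 2 * M" using eta by (simp add: power2_eq_square field_simps)
    finally show ?thesis by simp
  qed
  finally show ?thesis unfolding M_def .
qed

end
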